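(* Consider the modified Ghaffari process described in the context, with marking decisions in each phase that are only pairwise independent. If phase $t$ is a type-1 golden phase for an undecided node $v$, i.e., $p_t(v)=1/4$ and $d_t(v)\le 1/2$, then $v$ joins the independent set in phase $t$ (i.e., $v$ is marked and none of its undecided neighbors is marked) with probability at least $1/8$.
   Context: Let $G=(V,E)$ be an undirected graph. The process runs in phases $t=0,1,2,\dots$ on the graph induced by the undecided nodes (initially all nodes); $N(v)$ denotes the set of undecided neighbors of $v$. Each undecided node $v$ has a value $p_t(v)$, with $p_0(v)=1/4$; its effective degree is $d_t(v)=\sum_{u\in N(v)}p_t(u)$. Then $p_{t+1}(v)=p_t(v)/2$ if $d_t(v)\ge 1/2$, and $p_{t+1}(v)=\min\{2p_t(v),1/4\}$ if $d_t(v)<1/2$. In phase $t$, each undecided node $v$ becomes marked with probability $p_t(v)$, where the marking events of the nodes in phase $t$ are pairwise independent (given the state at the start of the phase); a marked node none of whose undecided neighbors is marked joins the independent set, and it and all its neighbors are removed. *)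

theory Defs
  imports "HOL-Probability.Probability"
begin

definition (in prob_space) pairwise_indep_events :: "('i \<Rightarrow> 'a set) \<Rightarrow> 'i set \<Rightarrow> bool" where
  "pairwise_indep_events A I \<longleftrightarrow>
     (\<forall>i\<in>I. A i \<in> events) \<and>
     (\<forall>i\<in>I. \<forall>j\<in>I. i \<noteq> j \<longrightarrow> prob (A i \<inter> A j) = prob (A i) * prob (A j))"

definition undecided_nbrs :: "('v \<Rightarrow> 'v \<Rightarrow> bool) \<Rightarrow> 'v set \<Rightarrow> 'v \<Rightarrow> 'v set" where
  "undecided_nbrs E U v = {u \<in> U. E v u}"

definition eff_degree :: "('v \<Rightarrow> 'v \<Rightarrow> bool) \<Rightarrow> 'v set \<Rightarrow> ('v \<Rightarrow> real) \<Rightarrow> 'v \<Rightarrow> real" where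
  "eff_degree E U p v = (\<Sum>u\<in>undecided_nbrs E U v. p u)"

end

theory Submission
  imports Defs
begin

theorem lemma3:
  fixes M :: "'a measure" and E :: "'v \<Rightarrow> 'v \<Rightarrow> bool" and U :: "'v set"
    and p :: "'v \<Rightarrow> real" and mark :: "'v \<Rightarrow> 'a set" and v :: 'v
  assumes "prob_space M"
    and "finite U"
    and "\<And>x y. E x y \<Longrightarrow> E y x"
    and "\<And>x. \<not> E x x"
    and "v \<in> U"
    and "prob_space.pairwise_indep_events M mark U"
    and "\<And>u. u \<in> U \<Longrightarrow> measure M (mark u) = p u"
    and "p v = 1/4"
    and "eff_degree E U p v \<le> 1/2"
  shows "measure M (mark v \<inter> (\<Inter>u\<in>undecided_nbrs E U v. space M - mark u)) \<ge> 1/8"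
proof -
  interpret prob_space M by fact
  define N where "N = undecided_nbrs E U v"
  have NU: "N \<subseteq> U" by (auto simp: N_def undecided_nbrs_def)
  have vN: "v \<notin> N" using assms(4) by (auto simp: N_def undecided_nbrs_def)
  have fN: "finite N" using NU assms(2) finite_subset by blast
  have ev: "\<And>u. u \<in> U \<Longrightarrow> mark u \<in> events"
    using assms(6) unfolding pairwise_indep_events_def by blast
  have indep: "\<And>u. u \<in> N \<Longrightarrow> prob (mark v \<inter> mark u) = prob (mark v) * prob (mark u)"
    using assms(6) assms(5) NU vN unfolding pairwise_indep_events_def by (metis subsetD)
  define B where "B = (\<Union>u\<in>N. mark v \<inter> mark u)"
  have Aev: "mark v \<in> events" using ev assms(5) by blast
  have Bev: "B \<in> events" unfolding B_def using fN NU ev Aev by (intro sets.finite_UN) auto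
  have eq: "mark v \<inter> (\<Inter>u\<in>N. space M - mark u) = mark v - B"
    using sets.sets_into_space[OF Aev] by (auto simp: B_def)
  have "B \<subseteq> mark v" by (auto simp: B_def)
  hence "prob (mark v - B) = prob (mark v) - prob B" using finite_measure_Diff Aev Bev by blast
  moreover have "prob B \<le> (\<Sum>u\<in>N. prob (mark v \<inter> mark u))"
    unfolding B_def using fN NU ev Aev by (intro finite_measure_subadditive_finite) auto
  moreover have "(\<Sum>u\<in>N. prob (mark v \<inter> mark u)) = 1/4 * (\<Sum>u\<in>N. p u)"
    unfolding sum_distrib_left
  proof (rule sum.cong[OF refl])
    fix u assume "u \<in> N"
    thus "prob (mark v \<inter> mark u) = 1/4 * p u"
      using indep[of u] assms(7,8,5) NU by auto
  qed
  moreover have "(\<Sum>u\<in>N. p u) \<le> 1/2" using assms(9) by (simp add: N_def eff_degree_def)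
  moreover have "prob (mark v) = 1/4" using assms(5,7,8) by simp
  ultimately have "prob (mark v - B) \<ge> 1/8" by linarith
  thus ?thesis using eq unfolding N_def by simp
qed

end
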